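(* Let $\Delta\ge 3$ be an integer and let $c_1,\dots,c_\Delta$ be defined by $c_\Delta=\frac{1}{\Delta}$ and $ic_i+c_{i+1}=1$ for $i=1,\dots,\Delta-1$. Let $\varepsilon>0$ and $j\in\{1,\dots,\Delta\}$. Then there are infinitely many graphs $G\in\mathcal{G}_\Delta$ for which the inequality $$\alpha(G)\ge \varepsilon|V_j(G)|+\sum_{i=1}^{\Delta} c_i|V_i(G)|$$ does not hold.
   Context: All graphs are simple, finite and undirected. For an integer $\Delta\ge 3$, $\mathcal{G}_\Delta$ denotes the set of connected graphs $G\neq K_{\Delta+1}$ with maximum degree $\Delta$. For a graph $G$ and $i\ge 1$, $V_i(G)$ is the set of vertices of $G$ of degree $i$. $\alpha(G)$ is the independence number of $G$. *)

theory Defs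
  imports Complex_Main
begin

definition simple_graph :: "'a set \<Rightarrow> 'a set set \<Rightarrow> bool" where
  "simple_graph V E \<longleftrightarrow> finite V \<and>
     (\<forall>e\<in>E. \<exists>u v. e = {u, v} \<and> u \<noteq> v \<and> u \<in> V \<and> v \<in> V)"

definition degree :: "'a set \<Rightarrow> 'a set set \<Rightarrow> 'a \<Rightarrow> nat" where
  "degree V E v = card {u \<in> V. {u, v} \<in> E}"

definition adj_rel :: "'a set set \<Rightarrow> ('a \<times> 'a) set" where
  "adj_rel E = {(u, v). {u, v} \<in> E}"

definition connected_graph :: "'a set \<Rightarrow> 'a set set \<Rightarrow> bool" where
  "connected_graph V E \<longleftrightarrow> V \<noteq> {} \<and> (\<forall>u\<in>V. \<forall>v\<in>V. (u, v) \<in> (adj_rel E)\<^sup>*)"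

definition max_degree_is :: "'a set \<Rightarrow> 'a set set \<Rightarrow> nat \<Rightarrow> bool" where
  "max_degree_is V E d \<longleftrightarrow> (\<forall>v\<in>V. degree V E v \<le> d) \<and> (\<exists>v\<in>V. degree V E v = d)"

definition is_complete_graph :: "'a set \<Rightarrow> 'a set set \<Rightarrow> nat \<Rightarrow> bool" where
  "is_complete_graph V E n \<longleftrightarrow> card V = n \<and> (\<forall>u\<in>V. \<forall>v\<in>V. u \<noteq> v \<longrightarrow> {u, v} \<in> E)"

definition in_G_Delta :: "nat \<Rightarrow> 'a set \<Rightarrow> 'a set set \<Rightarrow> bool" where
  "in_G_Delta d V E \<longleftrightarrow> simple_graph V E \<and> connected_graph V E \<and> max_degree_is V E d
     \<and> \<not> is_complete_graph V E (d + 1)"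

definition vertices_of_degree :: "'a set \<Rightarrow> 'a set set \<Rightarrow> nat \<Rightarrow> 'a set" where
  "vertices_of_degree V E i = {v \<in> V. degree V E v = i}"

definition independent_set :: "'a set \<Rightarrow> 'a set set \<Rightarrow> 'a set \<Rightarrow> bool" where
  "independent_set V E S \<longleftrightarrow> S \<subseteq> V \<and> (\<forall>u\<in>S. \<forall>v\<in>S. {u, v} \<notin> E)"

definition independence_number :: "'a set \<Rightarrow> 'a set set \<Rightarrow> nat" where
  "independence_number V E = Max {card S | S. independent_set V E S}"

end

theory Submission imports Defs begin

locale rg =
  fixes D s m :: nat
  assumes D3: "D \<ge> 3" and s1: "1 \<le> s" and sD: "s < D" and m2: "m \<ge> 2"
begin

definition U :: nat where "U = D + s + 1"
definition VV :: "nat set" where "VV = {..<m*U}"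
definition inadj :: "nat \<Rightarrow> nat \<Rightarrow> bool" where
  "inadj a b \<longleftrightarrow> (a < D \<and> b < D) \<or> (D \<le> a \<and> D \<le> b) \<or> (a = 2 \<and> b = D) \<or> (a = D \<and> b = 2)"
definition cross :: "nat \<Rightarrow> nat \<Rightarrow> bool" where
  "cross u v \<longleftrightarrow> u mod U = 1 \<and> v mod U = 0 \<and> v div U = Suc (u div U) mod m"
definition cadj :: "nat \<Rightarrow> nat \<Rightarrow> bool" where
  "cadj u v \<longleftrightarrow> (u div U = v div U \<and> inadj (u mod U) (v mod U)) \<or> cross u v \<or> cross v u"
definition EE :: "nat set set" where
  "EE = {{u, v} | u v. u \<in> VV \<and> v \<in> VV \<and> u \<noteq> v \<and> cadj u v}"
definition dpos :: "nat \<Rightarrow> nat" where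
  "dpos r = (if r < D then (if r \<le> 2 then D else D - 1) else if r = D then s + 1 else s)"

lemma U_gt: "U > D" "D + s < U" "U > 0" unfolding U_def by auto

lemma cadj_sym: "cadj u v = cadj v u"
  unfolding cadj_def inadj_def by auto

lemma edge_iff: "{x, y} \<in> EE \<longleftrightarrow> x \<in> VV \<and> y \<in> VV \<and> x \<noteq> y \<and> cadj x y"
  unfolding EE_def using cadj_sym by (auto simp: doubleton_eq_iff)

lemma simple: "simple_graph VV EE"
  unfolding simple_graph_def EE_def VV_def by auto

lemma decomp: "u = (u div U) * U + u mod U" by (metis div_mult_mod_eq)

lemma enc_div[simp]: "r < U \<Longrightarrow> (b * U + r) div U = b" using U_gt by simp
lemma enc_mod[simp]: "r < U \<Longrightarrow> (b * U + r) mod U = r" using U_gt by simp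

lemma U1: "1 < U" using U_gt D3 by simp
lemma enc1[simp]: "Suc (b * U) div U = b" "Suc (b * U) mod U = 1"
  using enc_div[of 1 b] enc_mod[of 1 b] U1 by simp_all

lemma inV: "b < m \<Longrightarrow> r < U \<Longrightarrow> b * U + r \<in> VV"
proof -
  assume "b < m" "r < U"
  then have "b * U + r < b * U + U" by simp
  also have "\<dots> = Suc b * U" by simp
  also have "\<dots> \<le> m * U" using \<open>b < m\<close> by (intro mult_right_mono) auto
  finally show ?thesis unfolding VV_def by simp
qed

lemma V_div: "u \<in> VV \<Longrightarrow> u div U < m"
  unfolding VV_def by (simp add: less_mult_imp_div_less)

lemma sucmod_ne: "a < m \<Longrightarrow> Suc a mod m \<noteq> a"
proof
  assume "a < m" "Suc a mod m = a"
  show False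
  proof (cases "Suc a < m")
    case True then show False using \<open>Suc a mod m = a\<close> by simp
  next
    case False then have "Suc a = m" using \<open>a < m\<close> by simp
    then show False using \<open>Suc a mod m = a\<close> m2 by simp
  qed
qed

lemma sucmod_lt: "Suc a mod m < m" using m2 by simp

definition P1 :: "nat \<Rightarrow> nat set" where
  "P1 r = {r'. r' < U \<and> r' \<noteq> r \<and> inadj r' r}"
definition P2 :: "nat \<Rightarrow> nat \<Rightarrow> nat set" where
  "P2 b r = (if r = 0 then (\<lambda>a. a * U + 1) ` {a. a < m \<and> Suc a mod m = b}
             else if r = 1 then {(Suc b mod m) * U} else {})"

lemma nbr: assumes "b < m" "r < U"
  shows "{u\<in>VV. {u, b*U+r} \<in> EE} = (\<lambda>r'. b*U+r') ` P1 r \<union> P2 b r"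
proof (intro set_eqI iffI)
  fix u assume "u \<in> {u\<in>VV. {u, b*U+r} \<in> EE}"
  then have u: "u \<in> VV" "u \<noteq> b*U+r" "cadj u (b*U+r)" using edge_iff by auto
  define a where "a = u div U"
  define q where "q = u mod U"
  have uaq: "u = a * U + q" unfolding a_def q_def using decomp .
  have q: "q < U" unfolding q_def using U_gt by simp
  have a: "a < m" unfolding a_def using V_div u(1) .
  from u(3) have "(a = b \<and> inadj q r) \<or> (q = 1 \<and> r = 0 \<and> b = Suc a mod m) \<or> (r = 1 \<and> q = 0 \<and> a = Suc b mod m)"
    unfolding cadj_def cross_def uaq using q assms by simp
  then show "u \<in> (\<lambda>r'. b*U+r') ` P1 r \<union> P2 b r"
  proof (elim disjE conjE)
    assume "a = b" "inadj q r"
    then show ?thesis using u(2) q unfolding uaq P1_def by auto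
  next
    assume "q = 1" "r = 0" "b = Suc a mod m"
    then show ?thesis using a unfolding uaq P2_def by auto
  next
    assume "r = 1" "q = 0" "a = Suc b mod m"
    then show ?thesis using a unfolding uaq P2_def by auto
  qed
next
  fix u assume "u \<in> (\<lambda>r'. b*U+r') ` P1 r \<union> P2 b r"
  then consider (A) r' where "u = b*U+r'" "r' < U" "r' \<noteq> r" "inadj r' r"
    | (B) a where "r = 0" "u = a*U+1" "a < m" "Suc a mod m = b"
    | (C) "r = 1" "u = (Suc b mod m) * U"
    unfolding P1_def P2_def by (auto split: if_splits)
  then show "u \<in> {u\<in>VV. {u, b*U+r} \<in> EE}"
  proof cases
    case A
    then show ?thesis using assms inV by (auto simp: edge_iff cadj_def)
  next
    case B
    have "1 < U" using U_gt D3 by simp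
    then have "u \<in> VV" "b*U+r \<in> VV" using B(2,3) assms inV[of a 1] inV[of b r] by auto
    moreover have "u \<noteq> b*U+r" using B sucmod_ne[of a] \<open>1 < U\<close>
      by (metis add.right_neutral enc_div enc_mod U_gt(3) zero_neq_one)
    moreover have "cadj u (b*U+r)"
    proof -
      have "u div U = a" "u mod U = 1" using B(2) \<open>1 < U\<close> enc_div enc_mod by metis+
      moreover have "(b*U+r) div U = b" "(b*U+r) mod U = 0" using B(1) assms by simp_all
      ultimately show ?thesis using B unfolding cadj_def cross_def by simp
    qed
    ultimately show ?thesis by (simp add: edge_iff)
  next
    case C
    have "1 < U" using U_gt D3 by simp
    then have "u \<in> VV" "b*U+r \<in> VV" using C(2) assms inV[of "Suc b mod m" 0] inV[of b r] sucmod_lt by auto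
    moreover have "u \<noteq> b*U+r" using C sucmod_ne[of b] \<open>1 < U\<close> assms
      by (metis add.right_neutral enc_div U_gt(3))
    moreover have "cadj u (b*U+r)" using C \<open>1 < U\<close> assms unfolding cadj_def cross_def by simp
    ultimately show ?thesis by (simp add: edge_iff)
  qed
qed

lemma card_P1:
  assumes "r < U"
  shows "card (P1 r) = (if r < D then (if r = 2 then D else D - 1) else if r = D then s + 1 else s)"
proof -
  have UDs: "U = D + s + 1" by (rule U_def)
  consider (a) "r < D" "r \<noteq> 2" | (b) "r = 2" | (c) "r = D" | (d) "D < r" by linarith
  then show ?thesis
  proof cases
    case a
    then have "P1 r = {..<D} - {r}" unfolding P1_def inadj_def using U_gt by auto
    then show ?thesis using a by simp
  next
    case b
    then have "P1 r = insert D ({..<D} - {2})" unfolding P1_def inadj_def using U_gt D3 by auto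
    then show ?thesis using b D3 by simp
  next
    case c
    then have "P1 r = insert 2 {D<..<U}" unfolding P1_def inadj_def using U_gt D3 by auto
    then show ?thesis using c D3 UDs by simp
  next
    case d
    then have "P1 r = {D..<U} - {r}" unfolding P1_def inadj_def using U_gt D3 assms by auto
    then show ?thesis using d assms UDs by simp
  qed
qed

lemma card_P2:
  assumes "b < m"
  shows "card (P2 b r) = (if r \<le> 1 then 1 else 0)"
proof -
  have "{a. a < m \<and> Suc a mod m = b} = {(b + m - 1) mod m}"
  proof (cases b)
    case 0
    have "Suc a mod m = 0 \<longleftrightarrow> a = m - 1" if "a < m" for a
    proof (cases "Suc a < m")
      case True then show ?thesis using that by auto
    next
      case False then show ?thesis using that by auto
    qed
    have "a \<in> {a. a < m \<and> Suc a mod m = b} \<longleftrightarrow> a \<in> {(b + m - 1) mod m}" for a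
    proof
      assume "a \<in> {a. a < m \<and> Suc a mod m = b}"
      then show "a \<in> {(b + m - 1) mod m}" using 0 m2 \<open>\<And>a. a < m \<Longrightarrow> _\<close>[of a] by simp
    next
      assume "a \<in> {(b + m - 1) mod m}"
      then have "a = m - 1" using 0 m2 by simp
      then show "a \<in> {a. a < m \<and> Suc a mod m = b}" using 0 m2 by simp
    qed
    then show ?thesis by blast
  next
    case (Suc b')
    have "Suc a mod m = Suc b' \<longleftrightarrow> a = b'" if "a < m" for a
    proof (cases "Suc a < m")
      case True then show ?thesis using that by auto
    next
      case False then have "Suc a = m" using that by simp
      then show ?thesis using that assms Suc by auto
    qed
    moreover have "(b + m - 1) mod m = b'" using Suc assms by simp
    ultimately show ?thesis using Suc assms by auto
  qed
  moreover have "inj (\<lambda>a. a * U + 1)" using U_gt by (auto intro!: injI)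
  ultimately show ?thesis unfolding P2_def by auto
qed

lemma degree_enc:
  assumes "b < m" "r < U"
  shows "degree VV EE (b*U+r) = dpos r"
proof -
  have disj: "(\<lambda>r'. b*U+r') ` P1 r \<inter> P2 b r = {}"
  proof -
    have "x div U \<noteq> b" if "x \<in> P2 b r" for x
      using that sucmod_ne[of b] sucmod_lt assms U1 unfolding P2_def
      by (auto split: if_splits)
    moreover have "x div U = b" if "x \<in> (\<lambda>r'. b*U+r') ` P1 r" for x
      using that unfolding P1_def by auto
    ultimately show ?thesis by blast
  qed
  have f1: "finite (P1 r)" unfolding P1_def by simp
  have f2: "finite (P2 b r)" unfolding P2_def by auto
  have "card ((\<lambda>r'. b*U+r') ` P1 r) = card (P1 r)" by (simp add: card_image)
  then have "degree VV EE (b*U+r) = card (P1 r) + card (P2 b r)"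
    unfolding degree_def nbr[OF assms] using card_Un_disjoint[OF _ f2 disj] f1 by simp
  then show ?thesis using card_P1[OF assms(2)] card_P2[OF assms(1)] D3 unfolding dpos_def by auto
qed

lemma V_enc: "v \<in> VV \<Longrightarrow> \<exists>b r. b < m \<and> r < U \<and> v = b*U+r"
  using V_div decomp U_gt(3) by (metis mod_less_divisor)

lemma dpos_le: "dpos r \<le> D" "1 \<le> dpos r" using sD s1 D3 unfolding dpos_def by auto

lemma deg_le: "v \<in> VV \<Longrightarrow> degree VV EE v \<le> D \<and> 1 \<le> degree VV EE v"
  using V_enc degree_enc dpos_le by metis

lemma deg0: "degree VV EE 0 = D"
  using degree_enc[of 0 0] m2 U_gt D3 unfolding dpos_def by simp

lemma card_VV: "card VV = m * U" unfolding VV_def by simp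

lemma ar: "x \<in> VV \<Longrightarrow> y \<in> VV \<Longrightarrow> x \<noteq> y \<Longrightarrow> cadj x y \<Longrightarrow> (x, y) \<in> adj_rel EE"
  unfolding adj_rel_def using edge_iff by simp

lemma ar_in: "b < m \<Longrightarrow> r1 < U \<Longrightarrow> r2 < U \<Longrightarrow> r1 \<noteq> r2 \<Longrightarrow> inadj r1 r2
   \<Longrightarrow> (b*U+r1, b*U+r2) \<in> adj_rel EE"
  by (rule ar) (auto simp: inV cadj_def)

lemma to_block0: assumes "b < m" "r < U" shows "(b*U+r, b*U) \<in> (adj_rel EE)\<^sup>*"
proof -
  have U2: "2 < U" "D < U" using U_gt D3 by auto
  consider (z) "r = 0" | (a) "0 < r" "r < D" | (c) "D \<le> r" by linarith
  then show ?thesis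
  proof cases
    case z then show ?thesis by simp
  next
    case a
    then show ?thesis using ar_in[of b r 0] assms U2 unfolding inadj_def by auto
  next
    case c
    have s1: "(b*U+D, b*U+2) \<in> adj_rel EE" using ar_in[of b D 2] assms U2 D3 unfolding inadj_def by auto
    have s2: "(b*U+2, b*U+0) \<in> adj_rel EE" using ar_in[of b 2 0] assms U2 D3 unfolding inadj_def by auto
    have s0: "(b*U+r, b*U+D) \<in> (adj_rel EE)\<^sup>*"
    proof (cases "r = D")
      case True then show ?thesis by simp
    next
      case False then show ?thesis using ar_in[of b r D] assms U2 c unfolding inadj_def by auto
    qed
    show ?thesis using s0 s1 s2 by simp
  qed
qed

lemma block_to0: "b < m \<Longrightarrow> (b*U, 0) \<in> (adj_rel EE)\<^sup>*"
proof (induction b)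
  case 0 then show ?case by simp
next
  case (Suc b)
  have "(Suc b * U, b*U+1) \<in> adj_rel EE"
  proof (rule ar)
    show "Suc b * U \<in> VV" using inV[of "Suc b" 0] Suc U_gt by simp
    show "b*U+1 \<in> VV" using inV[of b 1] Suc U1 by simp
    have "(Suc b * U) div U = Suc b" "(Suc b * U) mod U = 0" using U_gt by simp_all
    then show "Suc b * U \<noteq> b*U+1" using U1 by (metis enc_div add_0_right Suc_n_not_n)
    have "(Suc b * U) div U = Suc b" "(Suc b * U) mod U = 0" using U_gt by simp_all
    then show "cadj (Suc b * U) (b*U+1)" unfolding cadj_def cross_def using Suc.prems U1 by simp
  qed
  moreover have "(b*U+1, b*U) \<in> (adj_rel EE)\<^sup>*" using to_block0[of b 1] Suc.prems U1 by simp
  ultimately show ?case using Suc by simp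
qed

lemma ar_sym: "(x, y) \<in> adj_rel EE \<Longrightarrow> (y, x) \<in> adj_rel EE"
  unfolding adj_rel_def by (simp add: insert_commute)

lemma connected: "connected_graph VV EE"
proof -
  have to0: "(v, 0) \<in> (adj_rel EE)\<^sup>*" if "v \<in> VV" for v
    using V_enc[OF that] to_block0 block_to0 by (metis rtrancl_trans)
  have "(adj_rel EE)\<inverse> = adj_rel EE" using ar_sym by auto
  then have from0: "(0, v) \<in> (adj_rel EE)\<^sup>*" if "v \<in> VV" for v
    using to0[OF that] by (metis rtrancl_converseI)
  have "VV \<noteq> {}" using inV[of 0 0] m2 U_gt by auto
  then show ?thesis unfolding connected_graph_def using to0 from0 by (meson rtrancl_trans)
qed

lemma indep_le: assumes "independent_set VV EE S" shows "card S \<le> 2 * m"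
proof -
  define f where "f v = (v div U, v mod U < D)" for v
  have SV: "S \<subseteq> VV" and ind: "\<forall>u\<in>S. \<forall>v\<in>S. {u, v} \<notin> EE" using assms unfolding independent_set_def by auto
  have "inj_on f S"
  proof (rule inj_onI)
    fix u v assume uv: "u \<in> S" "v \<in> S" "f u = f v"
    show "u = v"
    proof (rule ccontr)
      assume "u \<noteq> v"
      moreover have "cadj u v" using uv(3) unfolding f_def cadj_def inadj_def by auto
      ultimately have "{u, v} \<in> EE" using uv SV edge_iff by auto
      then show False using ind uv by auto
    qed
  qed
  moreover have "f ` S \<subseteq> {..<m} \<times> UNIV" using SV V_div unfolding f_def by auto
  ultimately have "card S \<le> card ({..<m} \<times> (UNIV :: bool set))"
    by (metis card_image card_mono finite_SigmaI finite_UNIV finite_lessThan)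
  then show ?thesis by (simp add: card_cartesian_product)
qed

lemma alpha_le: "independence_number VV EE \<le> 2 * m"
proof -
  have "{card S | S. independent_set VV EE S} \<subseteq> {..2*m}" using indep_le by auto
  then have fin: "finite {card S | S. independent_set VV EE S}" by (rule finite_subset) simp
  have "independent_set VV EE {}" unfolding independent_set_def by simp
  then have ne: "{card S | S. independent_set VV EE S} \<noteq> {}" by blast
  show ?thesis unfolding independence_number_def using Max_le_iff[OF fin ne] indep_le by auto
qed

lemma sum_blocks: "(\<Sum>v\<in>{..<k*U}. g v) = (\<Sum>b<k. \<Sum>r<U. g (b*U+r))"
proof (induction k)
  case 0 then show ?case by simp
next
  case (Suc k)
  have "{..<Suc k * U} = {..<k*U} \<union> (\<lambda>r. k*U+r) ` {..<U}"
  proof (intro set_eqI iffI)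
    fix x assume x: "x \<in> {..<Suc k * U}"
    show "x \<in> {..<k*U} \<union> (\<lambda>r. k*U+r) ` {..<U}"
    proof (cases "x < k*U")
      case True then show ?thesis by simp
    next
      case False
      then have "x = k*U + (x - k*U)" "x - k*U < U" using x by auto
      then show ?thesis by (metis UnI2 imageI lessThan_iff)
    qed
  next
    fix x assume "x \<in> {..<k*U} \<union> (\<lambda>r. k*U+r) ` {..<U}"
    then show "x \<in> {..<Suc k * U}" by auto
  qed
  moreover have "{..<k*U} \<inter> (\<lambda>r. k*U+r) ` {..<U} = {}" by auto
  ultimately have "(\<Sum>v\<in>{..<Suc k*U}. g v) = (\<Sum>v\<in>{..<k*U}. g v) + (\<Sum>v\<in>(\<lambda>r. k*U+r) ` {..<U}. g v)"
    by (simp add: sum.union_disjoint)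
  also have "(\<Sum>v\<in>(\<lambda>r. k*U+r) ` {..<U}. g v) = (\<Sum>r<U. g (k*U+r))"
    by (simp add: sum.reindex)
  finally show ?case using Suc by simp
qed

lemma sum_deg:
  fixes c :: "nat \<Rightarrow> real"
  shows "(\<Sum>i=1..D. c i * real (card (vertices_of_degree VV EE i))) = (\<Sum>v\<in>VV. c (degree VV EE v))"
proof -
  have fin: "finite VV" unfolding VV_def by simp
  have "(\<Sum>v\<in>VV. c (degree VV EE v)) = (\<Sum>i\<in>{1..D}. \<Sum>v\<in>{v\<in>VV. degree VV EE v = i}. c (degree VV EE v))"
    using deg_le by (intro sum.group[symmetric] fin) auto
  also have "\<dots> = (\<Sum>i\<in>{1..D}. c i * real (card (vertices_of_degree VV EE i)))"
    unfolding vertices_of_degree_def by (intro sum.cong refl) simp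
  finally show ?thesis by simp
qed

lemma sum_pos:
  fixes c :: "nat \<Rightarrow> real"
  assumes cD: "c D = 1 / real D" and cD1: "real (D-1) * c (D-1) + c D = 1"
    and cs: "real s * c s + c (s+1) = 1"
  shows "(\<Sum>r<U. c (dpos r)) = 2"
proof -
  have UDs: "U = Suc D + s" unfolding U_def by simp
  have "{..<U} = {0..<U}" by auto
  have "(\<Sum>r<U. c (dpos r)) = (\<Sum>r\<in>{0..<3}. c (dpos r)) + (\<Sum>r\<in>{3..<D}. c (dpos r))
       + (\<Sum>r\<in>{D..<Suc D}. c (dpos r)) + (\<Sum>r\<in>{Suc D..<U}. c (dpos r))"
  proof -
    have a: "(\<Sum>r\<in>{0..<3}. c (dpos r)) + (\<Sum>r\<in>{3..<D}. c (dpos r)) = (\<Sum>r\<in>{0..<D}. c (dpos r))"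
      using D3 by (intro sum.atLeastLessThan_concat) auto
    have b: "(\<Sum>r\<in>{0..<D}. c (dpos r)) + (\<Sum>r\<in>{D..<Suc D}. c (dpos r)) = (\<Sum>r\<in>{0..<Suc D}. c (dpos r))"
      by (intro sum.atLeastLessThan_concat) auto
    have d: "(\<Sum>r\<in>{0..<Suc D}. c (dpos r)) + (\<Sum>r\<in>{Suc D..<U}. c (dpos r)) = (\<Sum>r\<in>{0..<U}. c (dpos r))"
      using U_gt by (intro sum.atLeastLessThan_concat) auto
    show ?thesis using a b d by (simp add: atLeast0LessThan)
  qed
  also have "(\<Sum>r\<in>{0..<3}. c (dpos r)) = 3 * c D"
    using D3 by (simp add: numeral_3_eq_3 dpos_def)
  also have "(\<Sum>r\<in>{3..<D}. c (dpos r)) = real (D - 3) * c (D - 1)"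
    by (simp add: dpos_def)
  also have "(\<Sum>r\<in>{D..<Suc D}. c (dpos r)) = c (s + 1)" by (simp add: dpos_def)
  also have "(\<Sum>r\<in>{Suc D..<U}. c (dpos r)) = real s * c s"
    by (simp add: dpos_def UDs)
  finally have "(\<Sum>r<U. c (dpos r)) = 3 * c D + real (D - 3) * c (D - 1) + c (s + 1) + real s * c s" .
  moreover have "c (D - 1) = 1 / real D"
  proof -
    have "real (D-1) = real D - 1" using D3 by simp
    then have "(real D - 1) * c (D - 1) = (real D - 1) / real D" using cD1 cD D3 by (simp add: field_simps)
    then have "(real D - 1) * (c (D - 1) - 1 / real D) = 0" using D3 by (simp add: field_simps)
    moreover have "real D - 1 \<noteq> 0" using D3 by simp
    ultimately show ?thesis by simp
  qed
  moreover have "real (D - 3) = real D - 3" using D3 by simp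
  ultimately have "(\<Sum>r<U. c (dpos r)) = 3 * (1 / real D) + (real D - 3) * (1 / real D) + (real s * c s + c (s + 1))"
    using cD by simp
  also have "\<dots> = real D / real D + 1" using cs by (simp add: field_simps)
  also have "\<dots> = 2" using D3 by simp
  finally show ?thesis .
qed

end

theorem theorem3:
  fixes \<Delta> j :: nat and c :: "nat \<Rightarrow> real" and \<epsilon> :: real
  assumes "\<Delta> \<ge> 3"
    and "c \<Delta> = 1 / real \<Delta>"
    and "\<forall>i\<in>{1..\<Delta> - 1}. real i * c i + c (i + 1) = 1"
    and "\<epsilon> > 0"
    and "j \<in> {1..\<Delta>}"
  shows "\<forall>N. \<exists>(V :: nat set) E. card V \<ge> N \<and> in_G_Delta \<Delta> V E \<and>
           \<not> (real (independence_number V E) \<ge>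
                \<epsilon> * real (card (vertices_of_degree V E j))
                + (\<Sum>i=1..\<Delta>. c i * real (card (vertices_of_degree V E i))))"
proof
  fix N :: nat
  define s where "s = min j (\<Delta> - 1)"
  define m where "m = N + 2"
  have s1: "1 \<le> s" and sD: "s < \<Delta>" using assms(1,5) unfolding s_def by auto
  interpret G: rg \<Delta> s m
    using assms(1) s1 sD unfolding m_def by unfold_locales auto
  have cD1: "real (\<Delta>-1) * c (\<Delta>-1) + c \<Delta> = 1"
    using assms(1,3) bspec[OF assms(3), of "\<Delta> - 1"] by simp
  have cs: "real s * c s + c (s+1) = 1" using bspec[OF assms(3), of s] s1 sD by simp
  have card: "card G.VV \<ge> N"
  proof -
    have "N \<le> m" unfolding m_def by simp
    also have "m \<le> m * G.U" using G.U_gt by simp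
    finally show ?thesis using G.card_VV by simp
  qed
  have ing: "in_G_Delta \<Delta> G.VV G.EE"
  proof -
    have "0 \<in> G.VV" using G.inV[of 0 0] G.m2 G.U_gt by simp
    then have md: "max_degree_is G.VV G.EE \<Delta>" unfolding max_degree_is_def using G.deg_le G.deg0 by auto
    have "2 * G.U \<le> m * G.U" unfolding m_def by simp
    moreover have "\<Delta> + 1 < 2 * G.U" using G.U_gt by simp
    ultimately have "card G.VV > \<Delta> + 1" using G.card_VV by linarith
    then have "\<not> is_complete_graph G.VV G.EE (\<Delta> + 1)" unfolding is_complete_graph_def by simp
    then show ?thesis unfolding in_G_Delta_def using G.simple G.connected md by simp
  qed
  have sumeq: "(\<Sum>i=1..\<Delta>. c i * real (card (vertices_of_degree G.VV G.EE i))) = 2 * real m"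
  proof -
    have "(\<Sum>i=1..\<Delta>. c i * real (card (vertices_of_degree G.VV G.EE i)))
        = (\<Sum>v\<in>G.VV. c (degree G.VV G.EE v))" by (rule G.sum_deg)
    also have "\<dots> = (\<Sum>b<m. \<Sum>r<G.U. c (degree G.VV G.EE (b*G.U+r)))"
      unfolding G.VV_def by (rule G.sum_blocks)
    also have "\<dots> = (\<Sum>b<m. \<Sum>r<G.U. c (G.dpos r))"
      using G.degree_enc by (intro sum.cong refl) simp
    also have "\<dots> = (\<Sum>b<m. 2)" using G.sum_pos[OF assms(2) cD1 cs] by simp
    finally show ?thesis by simp
  qed
  have vj: "card (vertices_of_degree G.VV G.EE j) \<ge> 1"
  proof -
    obtain w where w: "w \<in> G.VV" "degree G.VV G.EE w = j"
    proof (cases "j = \<Delta>")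
      case True
      then show ?thesis using that G.deg0 G.inV[of 0 0] G.m2 G.U_gt by simp
    next
      case False
      then have sj: "s = j" using assms(5) unfolding s_def by auto
      have "\<Delta> + 1 < G.U" using G.U_gt s1 by simp
      then have "degree G.VV G.EE (0 * G.U + (\<Delta> + 1)) = j" "0 * G.U + (\<Delta> + 1) \<in> G.VV"
        using G.degree_enc[of 0 "\<Delta>+1"] G.inV[of 0 "\<Delta>+1"] G.m2 sj unfolding G.dpos_def by auto
      then show ?thesis using that by simp
    qed
    have "finite (vertices_of_degree G.VV G.EE j)" unfolding vertices_of_degree_def G.VV_def by simp
    moreover have "w \<in> vertices_of_degree G.VV G.EE j" using w unfolding vertices_of_degree_def by simp
    ultimately show ?thesis by (metis card_0_eq empty_iff less_one not_le)
  qed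
  have "real (independence_number G.VV G.EE) \<le> 2 * real m" using G.alpha_le by simp
  moreover have "\<epsilon> * real (card (vertices_of_degree G.VV G.EE j)) > 0" using vj assms(4) by simp
  ultimately have "\<not> (real (independence_number G.VV G.EE) \<ge>
                \<epsilon> * real (card (vertices_of_degree G.VV G.EE j))
                + (\<Sum>i=1..\<Delta>. c i * real (card (vertices_of_degree G.VV G.EE i))))"
    using sumeq by simp
  then show "\<exists>(V :: nat set) E. card V \<ge> N \<and> in_G_Delta \<Delta> V E \<and>
           \<not> (real (independence_number V E) \<ge>
                \<epsilon> * real (card (vertices_of_degree V E j))
                + (\<Sum>i=1..\<Delta>. c i * real (card (vertices_of_degree V E i))))"
    using card ing by blast
qed

end
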